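(* Let $N$, $\mathfrak n=\bigoplus_{j=1}^{m+1}V_j$, $\mathcal B=\{X_1,\dots,X_p\}$, $L$, $s$, $\ell_1$, $\ell_2$, $\mathcal S=\{Y_1,\dots,Y_n\}$, $r=p-n$, $\mathfrak h$, $H$ and $d\pi_\nu$ be as in the context (in particular $0\le s<m$ and $\ell_i([V_k,V_j])=0$ for $i=1,2$ and all $k,j\ge 2$). Let $\lambda=\lambda_{s+1,\alpha}\ell_1+\lambda_{m+1,\beta}\ell_2$ with $\lambda_{s+1,\alpha},\lambda_{m+1,\beta}$ nonzero real numbers. Then there exist homogeneous polynomials $\tilde p_1,\dots,\tilde p_n,p_1,\dots,p_r$ of degree $s$ and homogeneous polynomials $\tilde q_1,\dots,\tilde q_n,q_1,\dots,q_r$ of degree $m$ on $\mathbb R^n$, all with real coefficients, such that for $f\in C^\infty(\mathbb R^n)$ $$d\pi_\lambda(L)f=\sum_{j=1}^n\Big(\frac{\partial}{\partial t_j}+i\big(\lambda_{s+1,\alpha}\tilde p_j(t)+\lambda_{m+1,\beta}\tilde q_j(t)\big)\Big)^2f-\sum_{k=1}^r\big(\lambda_{m+1,\beta}q_k(t)+\lambda_{s+1,\alpha}p_k(t)\big)^2f.$$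
   Context: Let $N$ be a connected, simply connected nilpotent Lie group whose Lie algebra $\mathfrak n$ (identified with the left-invariant vector fields on $N$) is stratified: $\mathfrak n=\bigoplus_{j=1}^{m+1}V_j$ with finite-dimensional subspaces $V_j$, $m\ge1$, $[V_i,V_j]\subseteq V_{i+j}$ if $i+j\le m+1$, $[V_i,V_j]=0$ if $i+j>m+1$, and $V_1$ generating $\mathfrak n$ as a Lie algebra. Let $\mathcal B=\{X_1,\dots,X_p\}$ be a basis of $V_1$ and $L=\sum_{i=1}^pX_i^2$. Fix an integer $s$ with $0\le s<m$. Fix a basis $\{X_{s+1,j}\}$ of $V_{s+1}$ and an index $\alpha$, and let $\ell_1\in\mathfrak n^*$ be defined by $\ell_1|_{V_i}=0$ for $i\ne s+1$ and $\ell_1(X_{s+1,j})=\delta_{j\alpha}$. Fix a basis $\{X_{m+1,j}\}$ of $V_{m+1}$ and an index $\beta$, and let $\ell_2\in\mathfrak n^*$ be defined by $\ell_2|_{V_i}=0$ for $i\le m$ and $\ell_2(X_{m+1,j})=\delta_{j\beta}$. Assume $\ell_i([V_k,V_j])=0$ for $i=1,2$ and all $k,j\ge2$. Greedy procedure for $\ell\in\mathfrak n^*$: let $P$ initially be the set of unordered pairs $\{X_k,X_j\}\subseteq\mathcal B$ with $\ell([X_k,X_j])\ne0$, and the output set be empty. While some element of $\mathcal B$ lies in at least two pairs of $P$: choose an element lying in the maximal number of pairs of $P$, add it to the output, and delete from $P$ all pairs containing it. When every element lies in at most one pair of $P$, add to the output one arbitrarily chosen element of each remaining pair. (Any admissible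 choices may be made.) Define $\mathcal S_1,\mathcal S_2\subseteq\mathcal B$: if $s\ne1$ and $m\ne1$, $\mathcal S_1=\{X\in\mathcal B:\exists Y\in\mathfrak n,\ \ell_1([X,Y])\ne0\}$ and $\mathcal S_2=\{X\in\mathcal B:\exists Y\in\mathfrak n,\ \ell_2([X,Y])\ne0\}$; if $s=1$, $\mathcal S_1$ is the output of the greedy procedure for $\ell_1$ and $\mathcal S_2$ is as in the previous case; if $m=1$ (so $s=0$), $\mathcal S_1=\emptyset$ and $\mathcal S_2$ is the output of the greedy procedure for $\ell_2$. Let $\mathcal S=\mathcal S_1\cup\mathcal S_2=\{Y_1,\dots,Y_n\}$, $n=\#\mathcal S$, $r=p-n$. Let $W$ be the span of $\mathcal B\setminus\mathcal S$, $\mathfrak h=W\oplus V_2\oplus\cdots\oplus V_{m+1}$ (an ideal of codimension $n$), $H=\exp\mathfrak h$. For $t\in\mathbb R^n$ put $e(t)=\exp(t_1Y_1+\dots+t_nY_n)$; for $a\in N$ let $a_{\mathcal S}\in\mathbb R^n$ be the unique vector with $a\in e(a_{\mathcal S})H$. For an $\mathbb R$-linear map $\nu:\mathfrak n\to\mathbb C$, $a\in N$, $f\in C^\infty(\mathbb R^n)$, set $(\pi_\nu(a)f)(t)=\exp\big(i\,\nu(\log(e(t)\,a\,e(t+a_{\mathcal S})^{-1}))\big)f(t+a_{\mathcal S})$, where $\log$ is the inverse of $\exp$ (for real $\nu$ vanishing on $[\mathfrak h,\mathfrak h]$ this is the representation of $N$ induced from the character $e^{i\nu\circ\log}$ of $H$).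 For $X\in\mathfrak n$ set $d\pi_\nu(X)f=\frac{d}{d\tau}\big|_{\tau=0}\pi_\nu(\exp\tau X)f$, and $d\pi_\nu(L)=\sum_{i=1}^p d\pi_\nu(X_i)^2$. *)

theory Defs
  imports "HOL-Analysis.Analysis"
begin

definition lie_bracket :: "('v::real_vector \<Rightarrow> 'v \<Rightarrow> 'v) \<Rightarrow> bool" where
  "lie_bracket br \<longleftrightarrow> bilinear br \<and> (\<forall>x. br x x = 0) \<and>
     (\<forall>x y z. br x (br y z) + br y (br z x) + br z (br x y) = 0)"

definition lie_subalgebra :: "('v::real_vector \<Rightarrow> 'v \<Rightarrow> 'v) \<Rightarrow> 'v set \<Rightarrow> bool" where
  "lie_subalgebra br A \<longleftrightarrow> subspace A \<and> (\<forall>x\<in>A. \<forall>y\<in>A. br x y \<in> A)"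

definition stratified :: "('v::real_vector \<Rightarrow> 'v \<Rightarrow> 'v) \<Rightarrow> (nat \<Rightarrow> 'v set) \<Rightarrow> nat \<Rightarrow> bool" where
  "stratified br V m \<longleftrightarrow> lie_bracket br \<and> 1 \<le> m \<and>
     (\<forall>j\<in>{1..m+1}. subspace (V j)) \<and>
     (\<forall>v. \<exists>!w. (\<forall>j\<in>{1..m+1}. w j \<in> V j) \<and> (\<forall>j. j \<notin> {1..m+1} \<longrightarrow> w j = 0) \<and>
            v = (\<Sum>j=1..m+1. w j)) \<and>
     (\<forall>i\<in>{1..m+1}. \<forall>j\<in>{1..m+1}. i + j \<le> m + 1 \<longrightarrow>
         (\<forall>x\<in>V i. \<forall>y\<in>V j. br x y \<in> V (i + j))) \<and>
     (\<forall>i\<in>{1..m+1}. \<forall>j\<in>{1..m+1}. i + j > m + 1 \<longrightarrow>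
         (\<forall>x\<in>V i. \<forall>y\<in>V j. br x y = 0)) \<and>
     (\<forall>A. lie_subalgebra br A \<and> V 1 \<subseteq> A \<longrightarrow> A = UNIV)"

definition basis_enum :: "(nat \<Rightarrow> 'v::real_vector) \<Rightarrow> nat \<Rightarrow> 'v set \<Rightarrow> bool" where
  "basis_enum Z d W \<longleftrightarrow> inj_on Z {..<d} \<and> independent (Z ` {..<d}) \<and> span (Z ` {..<d}) = W"

fun nest :: "('v::real_vector \<Rightarrow> 'v \<Rightarrow> 'v) \<Rightarrow> 'v list \<Rightarrow> 'v" where
  "nest br [] = 0"
| "nest br [a] = a"
| "nest br (a # b # w) = br a (nest br (b # w))"

definition dynkin_words :: "nat \<Rightarrow> (nat \<times> nat) list set" where
  "dynkin_words D = {rs. rs \<noteq> [] \<and> length rs \<le> D \<and>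
      (\<forall>(r, s)\<in>set rs. 1 \<le> r + s \<and> r \<le> D \<and> s \<le> D) \<and> (\<Sum>(r, s)\<leftarrow>rs. r + s) \<le> D}"

text \<open>Dynkin's formula for log(exp x exp y), truncated at total degree D
  (exact when all brackets of length > D vanish).\<close>
definition bch :: "('v::real_vector \<Rightarrow> 'v \<Rightarrow> 'v) \<Rightarrow> nat \<Rightarrow> 'v \<Rightarrow> 'v \<Rightarrow> 'v" where
  "bch br D x y = (\<Sum>rs\<in>dynkin_words D.
      ((-1) ^ (length rs - 1) /
        (real (length rs) * real (\<Sum>(r, s)\<leftarrow>rs. r + s) *
         (\<Prod>(r, s)\<leftarrow>rs. fact r * fact s))) *\<^sub>R
      nest br (concat (map (\<lambda>(r, s). replicate r x @ replicate s y) rs)))"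

text \<open>We identify N with its Lie algebra via exp (so exp = log = identity);
  the product of a step-(m+1) nilpotent group is then bch br (m+1), and a^-1 = -a.\<close>
definition gmult :: "('v::real_vector \<Rightarrow> 'v \<Rightarrow> 'v) \<Rightarrow> nat \<Rightarrow> 'v \<Rightarrow> 'v \<Rightarrow> 'v" where
  "gmult br m a b = bch br (m + 1) a b"

definition pair_count :: "'a set set \<Rightarrow> 'a \<Rightarrow> nat" where
  "pair_count P x = card {q\<in>P. x \<in> q}"

inductive greedy :: "'a set set \<Rightarrow> 'a set \<Rightarrow> 'a set \<Rightarrow> bool" where
  step: "2 \<le> pair_count P x \<Longrightarrow> (\<forall>y. pair_count P y \<le> pair_count P x) \<Longrightarrow>
         greedy {q\<in>P. x \<notin> q} (insert x Out) R \<Longrightarrow> greedy P Out R"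
| stop: "(\<forall>y. pair_count P y \<le> 1) \<Longrightarrow> (\<forall>q\<in>P. c q \<in> q) \<Longrightarrow> greedy P Out (Out \<union> c ` P)"

definition init_pairs :: "('v \<Rightarrow> 'v \<Rightarrow> 'v) \<Rightarrow> ('v \<Rightarrow> real) \<Rightarrow> 'v set \<Rightarrow> 'v set set" where
  "init_pairs br l B = {{a, b} | a b. a \<in> B \<and> b \<in> B \<and> l (br a b) \<noteq> 0}"

definition greedy_output :: "('v \<Rightarrow> 'v \<Rightarrow> 'v) \<Rightarrow> ('v \<Rightarrow> real) \<Rightarrow> 'v set \<Rightarrow> 'v set \<Rightarrow> bool" where
  "greedy_output br l B R \<longleftrightarrow> greedy (init_pairs br l B) {} R"

definition supp_set :: "('v \<Rightarrow> 'v \<Rightarrow> 'v) \<Rightarrow> ('v \<Rightarrow> real) \<Rightarrow> 'v set \<Rightarrow> 'v set" where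
  "supp_set br l B = {x\<in>B. \<exists>y. l (br x y) \<noteq> 0}"

definition S_choice :: "('v \<Rightarrow> 'v \<Rightarrow> 'v) \<Rightarrow> nat \<Rightarrow> nat \<Rightarrow> 'v set \<Rightarrow>
    ('v \<Rightarrow> real) \<Rightarrow> ('v \<Rightarrow> real) \<Rightarrow> 'v set \<Rightarrow> bool" where
  "S_choice br m s B l1 l2 S \<longleftrightarrow>
     (m = 1 \<longrightarrow> greedy_output br l2 B S) \<and>
     (s = 1 \<longrightarrow> (\<exists>S1. greedy_output br l1 B S1 \<and> S = S1 \<union> supp_set br l2 B)) \<and>
     (s \<noteq> 1 \<and> m \<noteq> 1 \<longrightarrow> S = supp_set br l1 B \<union> supp_set br l2 B)"

definition e_map :: "('n::finite \<Rightarrow> 'v::real_vector) \<Rightarrow> real^'n \<Rightarrow> 'v" where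
  "e_map Y t = (\<Sum>i\<in>UNIV. (t $ i) *\<^sub>R Y i)"

text \<open>a_S: the unique t with a \<in> e(t) H, i.e. e(t)^-1 a \<in> h.\<close>
definition coordS :: "('v::real_vector \<Rightarrow> 'v \<Rightarrow> 'v) \<Rightarrow> nat \<Rightarrow> 'v set \<Rightarrow> ('n::finite \<Rightarrow> 'v) \<Rightarrow> 'v \<Rightarrow> real^'n" where
  "coordS br m h Y a = (THE t. gmult br m (- e_map Y t) a \<in> h)"

definition rep_pi :: "('v::real_vector \<Rightarrow> 'v \<Rightarrow> 'v) \<Rightarrow> nat \<Rightarrow> 'v set \<Rightarrow> ('n::finite \<Rightarrow> 'v) \<Rightarrow>
    ('v \<Rightarrow> real) \<Rightarrow> 'v \<Rightarrow> (real^'n \<Rightarrow> complex) \<Rightarrow> real^'n \<Rightarrow> complex" where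
  "rep_pi br m h Y \<nu> a f t =
     (let aS = coordS br m h Y a in
      exp (\<i> * complex_of_real (\<nu> (gmult br m (gmult br m (e_map Y t) a) (- e_map Y (t + aS)))))
        * f (t + aS))"

definition d_rep_pi :: "('v::real_vector \<Rightarrow> 'v \<Rightarrow> 'v) \<Rightarrow> nat \<Rightarrow> 'v set \<Rightarrow> ('n::finite \<Rightarrow> 'v) \<Rightarrow>
    ('v \<Rightarrow> real) \<Rightarrow> 'v \<Rightarrow> (real^'n \<Rightarrow> complex) \<Rightarrow> real^'n \<Rightarrow> complex" where
  "d_rep_pi br m h Y \<nu> X f t = vector_derivative (\<lambda>\<tau>. rep_pi br m h Y \<nu> (\<tau> *\<^sub>R X) f t) (at 0)"

definition partial :: "'n::finite \<Rightarrow> (real^'n \<Rightarrow> complex) \<Rightarrow> real^'n \<Rightarrow> complex" where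
  "partial j g t = vector_derivative (\<lambda>u. g (t + u *\<^sub>R axis j 1)) (at 0)"

fun iter_partial :: "'n::finite list \<Rightarrow> (real^'n \<Rightarrow> complex) \<Rightarrow> real^'n \<Rightarrow> complex" where
  "iter_partial [] f = f"
| "iter_partial (j # js) f = partial j (iter_partial js f)"

definition smooth_fun :: "(real^'n::finite \<Rightarrow> complex) \<Rightarrow> bool" where
  "smooth_fun f \<longleftrightarrow> (\<forall>js. continuous_on UNIV (iter_partial js f) \<and>
      (\<forall>j t. (\<lambda>u. iter_partial js f (t + u *\<^sub>R axis j 1)) differentiable (at 0)))"

definition homog_poly :: "nat \<Rightarrow> (real^'n::finite \<Rightarrow> real) \<Rightarrow> bool" where
  "homog_poly d P \<longleftrightarrow> (\<exists>c :: ('n \<Rightarrow> nat) \<Rightarrow> real. \<forall>t.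
      P t = (\<Sum>\<alpha>\<in>{\<alpha>. sum \<alpha> UNIV = d}. c \<alpha> * (\<Prod>i\<in>UNIV. (t $ i) ^ \<alpha> i)))"

end

theory Submission
  imports Defs
begin


lemma finite_deg_set: "finite {\<alpha>::'n::finite \<Rightarrow> nat. sum \<alpha> UNIV = d}"
proof -
  have "{\<alpha>::'n \<Rightarrow> nat. sum \<alpha> UNIV = d} \<subseteq> PiE UNIV (\<lambda>_. {..d})"
  proof
    fix \<alpha> :: "'n \<Rightarrow> nat" assume "\<alpha> \<in> {\<alpha>. sum \<alpha> UNIV = d}"
    then have "\<alpha> i \<le> d" for i using member_le_sum[of i UNIV \<alpha>] by auto
    then show "\<alpha> \<in> PiE UNIV (\<lambda>_. {..d})" by auto
  qed
  moreover have "finite (PiE (UNIV::'n set) (\<lambda>_. {..d}))" by (rule finite_PiE) auto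
  ultimately show ?thesis by (rule finite_subset)
qed

lemma homog_poly_zero: "homog_poly d (\<lambda>t. 0)"
  unfolding homog_poly_def by (rule exI[of _ "\<lambda>_. 0"]) simp

lemma homog_poly_add: "homog_poly d P \<Longrightarrow> homog_poly d Q \<Longrightarrow> homog_poly d (\<lambda>t. P t + Q t)"
  unfolding homog_poly_def
  apply (elim exE)
  subgoal for c c' by (rule exI[of _ "\<lambda>a. c a + c' a"]) (simp add: distrib_right sum.distrib)
  done

lemma homog_poly_scale: "homog_poly d P \<Longrightarrow> homog_poly d (\<lambda>t. a * P t)"
  unfolding homog_poly_def
  apply (elim exE)
  subgoal for c by (rule exI[of _ "\<lambda>x. a * c x"]) (simp add: sum_distrib_left mult.assoc)
  done

lemma homog_poly_const: "homog_poly 0 (\<lambda>t::real^'n::finite. a)"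
proof -
  have "{\<alpha>::'n \<Rightarrow> nat. sum \<alpha> UNIV = 0} = {\<lambda>_. 0}" by (auto simp: fun_eq_iff sum_eq_0_iff)
  then show ?thesis unfolding homog_poly_def
    by (intro exI[of _ "\<lambda>_. a"]) simp
qed

lemma homog_poly_coord: "homog_poly 1 (\<lambda>t::real^'n::finite. t $ i)"
proof -
  define \<delta> where "\<delta> = (\<lambda>j::'n. if j = i then 1::nat else 0)"
  have s: "sum \<delta> UNIV = 1" unfolding \<delta>_def by simp
  have "(\<Sum>\<alpha>\<in>{\<alpha>::'n \<Rightarrow> nat. sum \<alpha> UNIV = 1}. (if \<alpha> = \<delta> then 1 else 0) * (\<Prod>j\<in>UNIV. (t $ j) ^ \<alpha> j))
        = (\<Prod>j\<in>UNIV. (t $ j) ^ \<delta> j)" for t :: "real^'n"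
  proof -
    have "(\<Sum>\<alpha>\<in>{\<alpha>::'n \<Rightarrow> nat. sum \<alpha> UNIV = 1}. (if \<alpha> = \<delta> then 1 else 0) * (\<Prod>j\<in>UNIV. (t $ j) ^ \<alpha> j))
       = (\<Sum>\<alpha>\<in>{\<alpha>::'n \<Rightarrow> nat. sum \<alpha> UNIV = 1}. if \<alpha> = \<delta> then (\<Prod>j\<in>UNIV. (t $ j) ^ \<alpha> j) else 0)"
      by (rule sum.cong) auto
    also have "\<dots> = (\<Prod>j\<in>UNIV. (t $ j) ^ \<delta> j)"
      apply (subst sum.delta) using s finite_deg_set[of 1] by auto
    finally show ?thesis .
  qed
  moreover have "(\<Prod>j\<in>UNIV. (t $ j) ^ \<delta> j) = t $ i" for t :: "real^'n"
    unfolding \<delta>_def by (simp add: if_distrib prod.If_cases cong: if_cong)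
  ultimately show ?thesis unfolding homog_poly_def
    by (intro exI[of _ "\<lambda>\<alpha>. if \<alpha> = \<delta> then 1 else 0"]) simp
qed

lemma homog_poly_mult:
  assumes "homog_poly a P" "homog_poly b Q"
  shows "homog_poly (a + b) (\<lambda>t::real^'n::finite. P t * Q t)"
proof -
  obtain c where c: "\<And>t. P t = (\<Sum>\<alpha>\<in>{\<alpha>. sum \<alpha> UNIV = a}. c \<alpha> * (\<Prod>i\<in>UNIV. (t $ i) ^ \<alpha> i))"
    using assms(1) unfolding homog_poly_def by blast
  obtain d where d: "\<And>t. Q t = (\<Sum>\<alpha>\<in>{\<alpha>. sum \<alpha> UNIV = b}. d \<alpha> * (\<Prod>i\<in>UNIV. (t $ i) ^ \<alpha> i))"
    using assms(2) unfolding homog_poly_def by blast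
  define A where "A = {\<alpha>::'n \<Rightarrow> nat. sum \<alpha> UNIV = a}"
  define B where "B = {\<alpha>::'n \<Rightarrow> nat. sum \<alpha> UNIV = b}"
  define C where "C = {\<alpha>::'n \<Rightarrow> nat. sum \<alpha> UNIV = a + b}"
  define g where "g = (\<lambda>(\<alpha>::'n \<Rightarrow> nat, \<beta>::'n \<Rightarrow> nat). (\<lambda>i. \<alpha> i + \<beta> i))"
  define e where "e = (\<lambda>\<gamma>. \<Sum>x\<in>{x \<in> A \<times> B. g x = \<gamma>}. c (fst x) * d (snd x))"
  have fA: "finite A" and fB: "finite B" and fC: "finite C"
    unfolding A_def B_def C_def by (rule finite_deg_set)+
  have gi: "g ` (A \<times> B) \<subseteq> C" unfolding A_def B_def C_def g_def by (auto simp: sum.distrib)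
  have "P t * Q t = (\<Sum>\<gamma>\<in>C. e \<gamma> * (\<Prod>i\<in>UNIV. (t $ i) ^ \<gamma> i))" for t
  proof -
    define h where "h = (\<lambda>x::('n\<Rightarrow>nat)\<times>('n\<Rightarrow>nat). c (fst x) * d (snd x) * (\<Prod>i\<in>UNIV. (t $ i) ^ g x i))"
    have "P t * Q t = (\<Sum>\<alpha>\<in>A. \<Sum>\<beta>\<in>B. (c \<alpha> * (\<Prod>i\<in>UNIV. (t $ i) ^ \<alpha> i)) * (d \<beta> * (\<Prod>i\<in>UNIV. (t $ i) ^ \<beta> i)))"
      unfolding c d A_def B_def by (simp add: sum_product)
    also have "\<dots> = (\<Sum>x\<in>A \<times> B. h x)"
      unfolding sum.cartesian_product h_def g_def
      by (intro sum.cong refl) (auto simp: power_add prod.distrib)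
    also have "\<dots> = (\<Sum>\<gamma>\<in>C. sum h {x \<in> A \<times> B. g x = \<gamma>})"
      by (rule sum.group[symmetric]) (use fA fB fC gi in auto)
    also have "\<dots> = (\<Sum>\<gamma>\<in>C. e \<gamma> * (\<Prod>i\<in>UNIV. (t $ i) ^ \<gamma> i))"
      unfolding e_def sum_distrib_right h_def by (intro sum.cong refl) auto
    finally show ?thesis .
  qed
  then show ?thesis unfolding homog_poly_def C_def by blast
qed



locale strat_setting =
  fixes br :: "'v::euclidean_space \<Rightarrow> 'v \<Rightarrow> 'v" and V :: "nat \<Rightarrow> 'v set" and m :: nat
  assumes strat: "stratified br V m"
begin

definition Vx :: "nat \<Rightarrow> 'v set" where
  "Vx j = (if j \<in> {1..m+1} then V j else {0})"

lemma strat_parts: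
  "lie_bracket br" "1 \<le> m" "\<forall>j\<in>{1..m+1}. subspace (V j)"
  "\<forall>v. \<exists>!w. (\<forall>j\<in>{1..m+1}. w j \<in> V j) \<and> (\<forall>j. j \<notin> {1..m+1} \<longrightarrow> w j = 0) \<and> v = (\<Sum>j=1..m+1. w j)"
  "\<forall>i\<in>{1..m+1}. \<forall>j\<in>{1..m+1}. i + j \<le> m + 1 \<longrightarrow> (\<forall>x\<in>V i. \<forall>y\<in>V j. br x y \<in> V (i + j))"
  "\<forall>i\<in>{1..m+1}. \<forall>j\<in>{1..m+1}. i + j > m + 1 \<longrightarrow> (\<forall>x\<in>V i. \<forall>y\<in>V j. br x y = 0)"
  "\<forall>A. lie_subalgebra br A \<and> V 1 \<subseteq> A \<longrightarrow> A = UNIV"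
  using strat[unfolded stratified_def]
  apply -
  apply (erule conjE, assumption)
  apply (erule conjE)+ apply assumption
  apply (erule conjE)+ apply assumption
  apply (erule conjE)+ apply assumption
  apply (erule conjE)+ apply assumption
  apply (erule conjE)+ apply assumption
  apply (erule conjE)+ apply assumption
  done

lemma bil: "bilinear br"
  using strat_parts(1) unfolding lie_bracket_def by (simp only:)

lemma bbil: "bounded_bilinear br"
  using bil bilinear_conv_bounded_bilinear by blast

lemma lin_r: "linear (\<lambda>y. br x y)" using bil unfolding bilinear_def by (simp only:)
lemma lin_l: "linear (\<lambda>x. br x y)" using bil unfolding bilinear_def by (simp only:)

lemma br_zero_left[simp]: "br 0 y = 0"
  using linear_0[OF lin_l] .
lemma br_zero_right[simp]: "br x 0 = 0"
  using linear_0[OF lin_r] .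
lemma br_scale_left: "br (a *\<^sub>R x) y = a *\<^sub>R br x y"
  using linear_scale[OF lin_l] .
lemma br_scale_right: "br x (a *\<^sub>R y) = a *\<^sub>R br x y"
  using linear_scale[OF lin_r] .
lemma br_add_left: "br (x + z) y = br x y + br z y"
  using linear_add[OF lin_l] .
lemma br_add_right: "br x (y + z) = br x y + br x z"
  using linear_add[OF lin_r] .
lemma br_alt[simp]: "br x x = 0"
  using strat_parts(1) unfolding lie_bracket_def by (simp only:)

lemma subspace_V: "j \<in> {1..m+1} \<Longrightarrow> subspace (V j)"
  using strat_parts(3) by blast

lemma subspace_Vx: "subspace (Vx j)"
  unfolding Vx_def using subspace_V subspace_0 by auto

lemma zero_Vx[simp]: "0 \<in> Vx j"
  using subspace_Vx subspace_0 by blast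

lemma br_V_in: "i \<in> {1..m+1} \<Longrightarrow> j \<in> {1..m+1} \<Longrightarrow> i + j \<le> m + 1 \<Longrightarrow> x \<in> V i \<Longrightarrow> y \<in> V j \<Longrightarrow> br x y \<in> V (i + j)"
  using strat_parts(5) by blast
lemma br_V_out: "i \<in> {1..m+1} \<Longrightarrow> j \<in> {1..m+1} \<Longrightarrow> i + j > m + 1 \<Longrightarrow> x \<in> V i \<Longrightarrow> y \<in> V j \<Longrightarrow> br x y = 0"
  using strat_parts(6) by blast

lemma br_Vx:
  assumes "x \<in> Vx i" "y \<in> Vx j" shows "br x y \<in> Vx (i + j)"
proof (cases "i \<in> {1..m+1} \<and> j \<in> {1..m+1}")
  case True
  show ?thesis
  proof (cases "i + j \<le> m + 1")
    case True2: True
    then have "br x y \<in> V (i + j)"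
      using br_V_in True assms unfolding Vx_def by auto
    then show ?thesis unfolding Vx_def using True True2 by auto
  next
    case False
    then have "br x y = 0"
      using br_V_out True assms unfolding Vx_def by auto
    then show ?thesis by simp
  qed
next
  case False
  then have "x = 0 \<or> y = 0" using assms unfolding Vx_def by (auto split: if_splits)
  then show ?thesis by auto
qed

inductive_set Gc :: "nat \<Rightarrow> (real^'n::finite \<Rightarrow> 'v) set" for a :: nat where
  Gzero: "(\<lambda>t. 0) \<in> Gc a"
| Gatom: "homog_poly k h \<Longrightarrow> w \<in> Vx (k + a) \<Longrightarrow> (\<lambda>t. h t *\<^sub>R w) \<in> Gc a"
| Gadd: "F \<in> Gc a \<Longrightarrow> H \<in> Gc a \<Longrightarrow> (\<lambda>t. F t + H t) \<in> Gc a"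

lemma Gc_scale: "F \<in> Gc a \<Longrightarrow> (\<lambda>t. c *\<^sub>R F t) \<in> Gc a"
proof (induction rule: Gc.induct)
  case Gzero then show ?case by (simp add: Gc.Gzero)
next
  case (Gatom k h w)
  have "(\<lambda>t. c *\<^sub>R (h t *\<^sub>R w)) = (\<lambda>t. (c * h t) *\<^sub>R w)" by simp
  then show ?case using Gc.Gatom[OF homog_poly_scale[OF Gatom(1)] Gatom(2)] by simp
next
  case (Gadd F H)
  then show ?case using Gc.Gadd[OF Gadd(3,4)] by (simp add: scaleR_add_right)
qed

lemma Gc_sum: "(\<And>x. x \<in> I \<Longrightarrow> F x \<in> Gc a) \<Longrightarrow> (\<lambda>t. \<Sum>x\<in>I. F x t) \<in> Gc a"
proof (induction I rule: infinite_finite_induct)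
  case (infinite A) then show ?case by (simp add: Gc.Gzero)
next
  case empty then show ?case by (simp add: Gc.Gzero)
next
  case (insert x A)
  then show ?case using Gc.Gadd[of "F x" a "\<lambda>t. \<Sum>x\<in>A. F x t"] by simp
qed

lemma Gc_br_atom:
  assumes "homog_poly k h" "w \<in> Vx (k + a)" "H \<in> Gc b"
  shows "(\<lambda>t. br (h t *\<^sub>R w) (H t)) \<in> Gc (a + b)"
  using assms(3)
proof (induction rule: Gc.induct)
  case Gzero then show ?case by (simp add: Gc.Gzero)
next
  case (Gatom k' h' w')
  have "(\<lambda>t. br (h t *\<^sub>R w) (h' t *\<^sub>R w')) = (\<lambda>t. (h t * h' t) *\<^sub>R br w w')"
    by (simp add: br_scale_left br_scale_right mult.commute)
  moreover have "br w w' \<in> Vx ((k + k') + (a + b))"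
    using br_Vx[OF assms(2) Gatom(2)] by (simp add: algebra_simps)
  ultimately show ?case using Gc.Gatom[OF homog_poly_mult[OF assms(1) Gatom(1)]] by simp
next
  case (Gadd F H)
  then show ?case using Gc.Gadd[OF Gadd(3,4)] by (simp add: br_add_right)
qed

lemma Gc_br: "F \<in> Gc a \<Longrightarrow> H \<in> Gc b \<Longrightarrow> (\<lambda>t. br (F t) (H t)) \<in> Gc (a + b)"
proof (induction rule: Gc.induct)
  case Gzero then show ?case by (simp add: Gc.Gzero)
next
  case (Gatom k h w)
  then show ?case using Gc_br_atom by blast
next
  case (Gadd F1 F2)
  then show ?case using Gc.Gadd[OF Gadd(3,4)] by (simp add: br_add_left)
qed

end


context strat_setting
begin

lemma nest_cons: "gs \<noteq> [] \<Longrightarrow> nest br (a # gs) = br a (nest br gs)"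
  by (cases gs) auto

lemma nest_mult: "(\<forall>x\<in>set xs. \<exists>c. x = c *\<^sub>R u) \<Longrightarrow> \<exists>c. nest br xs = c *\<^sub>R u"
proof (induction xs)
  case Nil then show ?case by (auto intro: exI[of _ 0])
next
  case (Cons a xs)
  show ?case
  proof (cases "xs = []")
    case True then show ?thesis using Cons by auto
  next
    case False
    obtain c where "nest br xs = c *\<^sub>R u" using Cons by auto
    moreover obtain d where "a = d *\<^sub>R u" using Cons by auto
    ultimately have "nest br (a # xs) = 0" using False
      by (simp add: nest_cons br_scale_left br_scale_right)
    then show ?thesis by (auto intro: exI[of _ 0])
  qed
qed

lemma nest_mult0: "(\<forall>x\<in>set xs. \<exists>c. x = c *\<^sub>R u) \<Longrightarrow> length xs \<ge> 2 \<Longrightarrow> nest br xs = 0"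
proof -
  assume a: "\<forall>x\<in>set xs. \<exists>c. x = c *\<^sub>R u" and l: "length xs \<ge> 2"
  define y where "y = hd xs"
  define ys where "ys = tl xs"
  have xs: "xs = y # ys" and "ys \<noteq> []" using l unfolding y_def ys_def by (cases xs; auto)+
  obtain c where "nest br ys = c *\<^sub>R u" using nest_mult[of ys u] a xs by auto
  moreover obtain d where "y = d *\<^sub>R u" using a xs by auto
  ultimately show ?thesis using \<open>ys \<noteq> []\<close> xs by (simp add: nest_cons br_scale_left br_scale_right)
qed

definition letters :: "'a \<Rightarrow> 'a \<Rightarrow> (nat \<times> nat) list \<Rightarrow> 'a list" where
  "letters x y rs = concat (map (\<lambda>(r, s). replicate r x @ replicate s y) rs)"

lemma letters_Cons: "letters x y ((r, s) # rs) = replicate r x @ replicate s y @ letters x y rs"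
  unfolding letters_def by simp

lemma length_letters: "length (letters x y rs) = (\<Sum>(r, s)\<leftarrow>rs. r + s)"
  unfolding letters_def by (induction rs) auto

lemma set_letters: "set (letters x y rs) \<subseteq> {x, y}"
proof (induction rs)
  case Nil then show ?case by (simp add: letters_def)
next
  case (Cons a rs)
  obtain r s where a: "a = (r, s)" by (cases a)
  show ?case using Cons.IH unfolding a letters_Cons by (auto simp: set_replicate_conv_if)
qed

lemma map_letters: "map f (letters x y rs) = letters (f x) (f y) rs"
proof (induction rs)
  case Nil then show ?case by (simp add: letters_def)
next
  case (Cons a rs)
  obtain r s where a: "a = (r, s)" by (cases a)
  show ?case using Cons.IH unfolding a letters_Cons by (auto simp: set_replicate_conv_if)
qed

lemma finite_dynkin: "finite (dynkin_words D)"
proof -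
  have "dynkin_words D \<subseteq> {xs. set xs \<subseteq> {..D} \<times> {..D} \<and> length xs \<le> D}"
    unfolding dynkin_words_def by auto
  moreover have "finite {xs. set xs \<subseteq> {..D} \<times> {..D} \<and> length xs \<le> D}"
    by (rule finite_lists_length_le) auto
  ultimately show ?thesis by (rule finite_subset)
qed

definition dcoef :: "(nat \<times> nat) list \<Rightarrow> real" where
  "dcoef rs = ((-1) ^ (length rs - 1) /
        (real (length rs) * real (\<Sum>(r, s)\<leftarrow>rs. r + s) *
         (\<Prod>(r, s)\<leftarrow>rs. fact r * fact s)))"

lemma bch_alt: "bch br D x y = (\<Sum>rs\<in>dynkin_words D. dcoef rs *\<^sub>R nest br (letters x y rs))"
  unfolding bch_def dcoef_def letters_def ..

lemma dynkin_long:
  assumes "rs \<in> dynkin_words D" "rs \<noteq> [(1,0)]" "rs \<noteq> [(0,1)]"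
  shows "(\<Sum>(r, s)\<leftarrow>rs. r + s) \<ge> 2"
proof -
  have ne: "rs \<noteq> []" and pos: "\<forall>(r, s)\<in>set rs. 1 \<le> r + s"
    using assms(1) unfolding dynkin_words_def by auto
  obtain a b rest where rs: "rs = (a, b) # rest" using ne by (cases rs) auto
  show ?thesis
  proof (cases rest)
    case Nil
    then have "1 \<le> a + b" using pos rs by auto
    moreover have "(a, b) \<noteq> (1, 0)" "(a, b) \<noteq> (0, 1)" using assms rs Nil by auto
    ultimately have "a + b \<ge> 2" by (cases a; cases b) auto
    then show ?thesis using rs Nil by simp
  next
    case (Cons c rest')
    obtain c1 c2 where c: "c = (c1, c2)" by (cases c)
    have "1 \<le> a + b" "1 \<le> c1 + c2" using pos rs Cons c by auto
    then show ?thesis using rs Cons c by simp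
  qed
qed

lemma dynkin_short: "1 \<le> D \<Longrightarrow> [(1,0)] \<in> dynkin_words D \<and> [(0,1)] \<in> dynkin_words D"
  unfolding dynkin_words_def by auto

lemma bch_split:
  assumes D: "1 \<le> D"
  shows "bch br D x y = x + y + (\<Sum>rs\<in>dynkin_words D - {[(1,0)], [(0,1)]}. dcoef rs *\<^sub>R nest br (letters x y rs))"
proof -
  have sub: "{[(1,0)], [(0,1)]} \<subseteq> dynkin_words D" using dynkin_short[OF D] by auto
  have "bch br D x y = (\<Sum>rs\<in>{[(1,0)], [(0,1)]}. dcoef rs *\<^sub>R nest br (letters x y rs))
      + (\<Sum>rs\<in>dynkin_words D - {[(1,0)], [(0,1)]}. dcoef rs *\<^sub>R nest br (letters x y rs))"
    unfolding bch_alt sum.subset_diff[OF sub finite_dynkin] by (rule add.commute)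
  moreover have "(\<Sum>rs\<in>{[(1,0)], [(0,1)]}. dcoef rs *\<^sub>R nest br (letters x y rs)) = x + y"
    by (simp add: dcoef_def letters_def)
  moreover have "a + b + c = b + c + a" for a b c :: 'v by simp
  ultimately show ?thesis by (simp only: add.commute)
qed

lemma bch_same:
  assumes D: "1 \<le> D"
  shows "bch br D (a *\<^sub>R u) (b *\<^sub>R u) = (a + b) *\<^sub>R u"
proof -
  have "nest br (letters (a *\<^sub>R u) (b *\<^sub>R u) rs) = 0"
    if "rs \<in> dynkin_words D - {[(1,0)], [(0,1)]}" for rs
  proof (rule nest_mult0[where u = u])
    show "\<forall>x\<in>set (letters (a *\<^sub>R u) (b *\<^sub>R u) rs). \<exists>c. x = c *\<^sub>R u"
      using set_letters[of "a *\<^sub>R u" "b *\<^sub>R u" rs] by blast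
    show "2 \<le> length (letters (a *\<^sub>R u) (b *\<^sub>R u) rs)"
      unfolding length_letters using dynkin_long that by auto
  qed
  then show ?thesis unfolding bch_split[OF D] by (simp add: scaleR_add_left)
qed

definition H2 :: "'v set" where
  "H2 = span (\<Union>j\<in>{2..m+1}. V j)"

lemma br_H2: "br x y \<in> H2"
proof -
  obtain wx where wx: "\<forall>j\<in>{1..m+1}. wx j \<in> V j" "x = (\<Sum>j=1..m+1. wx j)"
    using strat_parts(4) by blast
  obtain wy where wy: "\<forall>j\<in>{1..m+1}. wy j \<in> V j" "y = (\<Sum>j=1..m+1. wy j)"
    using strat_parts(4) by blast
  have "br x y = (\<Sum>i=1..m+1. \<Sum>j=1..m+1. br (wx i) (wy j))"
    unfolding wx(2) wy(2) by (simp only: linear_sum[OF lin_l] linear_sum[OF lin_r]) (rule sum.swap)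
  also have "\<dots> \<in> H2"
    unfolding H2_def
  proof (intro span_sum)
    fix i j assume i: "i \<in> {1..m+1}" and j: "j \<in> {1..m+1}"
    show "br (wx i) (wy j) \<in> span (\<Union>j\<in>{2..m+1}. V j)"
    proof (cases "i + j \<le> m + 1")
      case True
      then have "br (wx i) (wy j) \<in> V (i + j)" using br_V_in i j wx wy by blast
      moreover have "i + j \<in> {2..m+1}" using i j True by auto
      ultimately show ?thesis by (meson UN_I span_base)
    next
      case False
      then have "br (wx i) (wy j) = 0" using br_V_out i j wx wy by simp
      then show ?thesis by (simp add: span_zero)
    qed
  qed
  finally show ?thesis .
qed

lemma subspace_H2: "subspace H2" unfolding H2_def by (rule subspace_span)

lemma bch_H2:
  assumes D: "1 \<le> D"
  shows "bch br D x y - (x + y) \<in> H2"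
proof -
  have "nest br (letters x y rs) \<in> H2" if "rs \<in> dynkin_words D - {[(1,0)], [(0,1)]}" for rs
  proof -
    have "length (letters x y rs) \<ge> 2"
      unfolding length_letters using dynkin_long that by auto
    then obtain a b w where "letters x y rs = a # b # w"
      by (metis One_nat_def Suc_1 length_0_conv length_Cons list.exhaust not_less_eq_eq numeral_le_one_iff semiring_norm(69) zero_le_one)
    then show ?thesis using br_H2 by simp
  qed
  then have "(\<Sum>rs\<in>dynkin_words D - {[(1,0)], [(0,1)]}. dcoef rs *\<^sub>R nest br (letters x y rs)) \<in> H2"
    using subspace_H2 by (intro subspace_sum subspace_scale) auto
  then show ?thesis unfolding bch_split[OF D] by simp
qed

end


context strat_setting
begin

definition okd :: "(real \<Rightarrow> real^'n::finite \<Rightarrow> 'v) \<Rightarrow> bool" where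
  "okd \<Phi> \<longleftrightarrow> (\<lambda>t. \<Phi> 0 t) \<in> Gc 0 \<and>
     (\<exists>\<Phi>'\<in>Gc 1. \<forall>t. ((\<lambda>\<tau>. \<Phi> \<tau> t) has_vector_derivative \<Phi>' t) (at 0))"

lemma okd_affine:
  assumes "F \<in> Gc 0" "C \<in> Gc 1"
  shows "okd (\<lambda>\<tau> t. F t + \<tau> *\<^sub>R C t)"
  unfolding okd_def
proof (intro conjI bexI[of _ C] allI)
  show "(\<lambda>t. F t + 0 *\<^sub>R C t) \<in> Gc 0" using assms by simp
  show "C \<in> Gc 1" by fact
  fix t
  show "((\<lambda>\<tau>. F t + \<tau> *\<^sub>R C t) has_vector_derivative C t) (at 0)"
    by (auto intro!: derivative_eq_intros)
qed

lemma okd_const: "F \<in> Gc 0 \<Longrightarrow> okd (\<lambda>\<tau> t. F t)"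
  using okd_affine[of F "\<lambda>t. 0"] by (simp add: Gc.Gzero)

lemma okd_add:
  assumes "okd A" "okd B"
  shows "okd (\<lambda>\<tau> t. A \<tau> t + B \<tau> t)"
proof -
  obtain A' where A': "A' \<in> Gc 1" "\<And>t. ((\<lambda>\<tau>. A \<tau> t) has_vector_derivative A' t) (at 0)"
    using assms(1) unfolding okd_def by blast
  obtain B' where B': "B' \<in> Gc 1" "\<And>t. ((\<lambda>\<tau>. B \<tau> t) has_vector_derivative B' t) (at 0)"
    using assms(2) unfolding okd_def by blast
  show ?thesis unfolding okd_def
  proof (intro conjI bexI[of _ "\<lambda>t. A' t + B' t"] allI)
    show "(\<lambda>t. A 0 t + B 0 t) \<in> Gc 0" using assms unfolding okd_def by (blast intro: Gc.Gadd)
    show "(\<lambda>t. A' t + B' t) \<in> Gc 1" using A' B' by (blast intro: Gc.Gadd)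
    show "((\<lambda>\<tau>. A \<tau> t + B \<tau> t) has_vector_derivative A' t + B' t) (at 0)" for t
      using A'(2) B'(2) by (rule has_vector_derivative_add)
  qed
qed

lemma okd_scale:
  assumes "okd A"
  shows "okd (\<lambda>\<tau> t. c *\<^sub>R A \<tau> t)"
proof -
  obtain A' where A': "A' \<in> Gc 1" "\<And>t. ((\<lambda>\<tau>. A \<tau> t) has_vector_derivative A' t) (at 0)"
    using assms(1) unfolding okd_def by blast
  show ?thesis unfolding okd_def
  proof (intro conjI bexI[of _ "\<lambda>t. c *\<^sub>R A' t"] allI)
    show "(\<lambda>t. c *\<^sub>R A 0 t) \<in> Gc 0" using assms unfolding okd_def by (blast intro: Gc_scale)
    show "(\<lambda>t. c *\<^sub>R A' t) \<in> Gc 1" using A' by (blast intro: Gc_scale)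
    show "((\<lambda>\<tau>. c *\<^sub>R A \<tau> t) has_vector_derivative c *\<^sub>R A' t) (at 0)" for t
      using bounded_linear.has_vector_derivative[OF bounded_linear_scaleR_right A'(2)] .
  qed
qed

lemma okd_sum: "(\<And>x. x \<in> I \<Longrightarrow> okd (F x)) \<Longrightarrow> okd (\<lambda>\<tau> t. \<Sum>x\<in>I. F x \<tau> t)"
proof (induction I rule: infinite_finite_induct)
  case (infinite A) then show ?case using okd_const[OF Gc.Gzero] by simp
next
  case empty then show ?case using okd_const[OF Gc.Gzero] by simp
next
  case (insert x A)
  then show ?case using okd_add[of "F x" "\<lambda>\<tau> t. \<Sum>x\<in>A. F x \<tau> t"] by simp
qed

lemma okd_br:
  assumes "okd A" "okd B"
  shows "okd (\<lambda>\<tau> t. br (A \<tau> t) (B \<tau> t))"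
proof -
  obtain A' where A': "A' \<in> Gc 1" "\<And>t. ((\<lambda>\<tau>. A \<tau> t) has_vector_derivative A' t) (at 0)"
    using assms(1) unfolding okd_def by blast
  obtain B' where B': "B' \<in> Gc 1" "\<And>t. ((\<lambda>\<tau>. B \<tau> t) has_vector_derivative B' t) (at 0)"
    using assms(2) unfolding okd_def by blast
  have A0: "(\<lambda>t. A 0 t) \<in> Gc 0" and B0: "(\<lambda>t. B 0 t) \<in> Gc 0" using assms unfolding okd_def by blast+
  show ?thesis unfolding okd_def
  proof (intro conjI bexI[of _ "\<lambda>t. br (A 0 t) (B' t) + br (A' t) (B 0 t)"] allI)
    show "(\<lambda>t. br (A 0 t) (B 0 t)) \<in> Gc 0" using Gc_br[OF A0 B0] by simp
    show "(\<lambda>t. br (A 0 t) (B' t) + br (A' t) (B 0 t)) \<in> Gc 1"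
      using Gc_br[OF A0 B'(1)] Gc_br[OF A'(1) B0] by (intro Gc.Gadd) simp_all
    show "((\<lambda>\<tau>. br (A \<tau> t) (B \<tau> t)) has_vector_derivative br (A 0 t) (B' t) + br (A' t) (B 0 t)) (at 0)" for t
      using bounded_bilinear.has_vector_derivative[OF bbil A'(2) B'(2)] .
  qed
qed

lemma okd_nest: "(\<And>g. g \<in> set gs \<Longrightarrow> okd g) \<Longrightarrow> okd (\<lambda>\<tau> t. nest br (map (\<lambda>g. g \<tau> t) gs))"
proof (induction gs)
  case Nil then show ?case using okd_const[OF Gc.Gzero] by simp
next
  case (Cons a gs)
  show ?case
  proof (cases "gs = []")
    case True then show ?thesis using Cons by simp
  next
    case False
    have "okd (\<lambda>\<tau> t. br (a \<tau> t) (nest br (map (\<lambda>g. g \<tau> t) gs)))"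
      using Cons by (intro okd_br) auto
    then show ?thesis using False by (simp add: nest_cons)
  qed
qed

lemma okd_bch:
  assumes "okd A" "okd B"
  shows "okd (\<lambda>\<tau> t. bch br D (A \<tau> t) (B \<tau> t))"
proof -
  have "okd (\<lambda>\<tau> t. \<Sum>rs\<in>dynkin_words D. dcoef rs *\<^sub>R nest br (map (\<lambda>g. g \<tau> t) (letters A B rs)))"
  proof (intro okd_sum okd_scale okd_nest)
    fix rs g assume "g \<in> set (letters A B rs)"
    then show "okd g" using set_letters[of A B rs] assms by auto
  qed
  then show ?thesis unfolding bch_alt map_letters .
qed

end


lemma span_disjoint_indep:
  fixes B :: "'v::euclidean_space set"
  assumes "independent B" "S \<subseteq> B" "v \<in> span S" "v \<in> span (B - S)"
  shows "v = 0"
proof -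
  have fB: "finite B" using assms(1) unfolding independent_explicit by (rule conjunct1)
  have fS: "finite S" using fB assms(2) by (rule finite_subset[rotated])
  have fD: "finite (B - S)" using fB by (rule finite_Diff)
  obtain a where a: "v = (\<Sum>x\<in>S. a x *\<^sub>R x)" using assms(3) span_finite[OF fS] by auto
  obtain b where b: "v = (\<Sum>x\<in>B - S. b x *\<^sub>R x)" using assms(4) span_finite[OF fD] by auto
  define c where "c x = (if x \<in> S then a x else - b x)" for x
  have s1: "(\<Sum>x\<in>S. c x *\<^sub>R x) = v" unfolding a by (rule sum.cong) (auto simp: c_def)
  have s2: "(\<Sum>x\<in>B - S. c x *\<^sub>R x) = - v" unfolding b sum_negf[symmetric] by (rule sum.cong) (auto simp: c_def)
  have "(\<Sum>x\<in>B. c x *\<^sub>R x) = (\<Sum>x\<in>B - S. c x *\<^sub>R x) + (\<Sum>x\<in>S. c x *\<^sub>R x)"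
    by (rule sum.subset_diff[OF assms(2) fB])
  then have "(\<Sum>x\<in>B. c x *\<^sub>R x) = 0" unfolding s1 s2 by simp
  then have "\<forall>x\<in>B. c x = 0" using assms(1) unfolding independent_explicit by blast
  then have "\<forall>x\<in>S. a x = 0" using assms(2) unfolding c_def by (metis subsetD)
  then show ?thesis unfolding a by simp
qed

lemma e_map_add: "e_map Y (u + w) = e_map Y u + e_map Y w"
  unfolding e_map_def by (simp add: scaleR_add_left sum.distrib)
lemma e_map_scale: "e_map Y (c *\<^sub>R u) = c *\<^sub>R e_map Y u"
  unfolding e_map_def by (simp add: scaleR_sum_right)
lemma e_map_minus: "e_map Y (- u) = - e_map Y u"
  unfolding e_map_def by (simp add: sum_negf)
lemma e_map_diff: "e_map Y (u - w) = e_map Y u - e_map Y w"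
  unfolding e_map_def by (simp add: scaleR_diff_left sum_subtractf)
lemma e_map_axis: "e_map Y (axis j 1) = Y j"
proof -
  have "e_map Y (axis j 1) = (\<Sum>i\<in>UNIV. if i = j then Y i else 0)"
    unfolding e_map_def by (rule sum.cong) (auto simp: axis_def)
  then show ?thesis by simp
qed
lemma e_map_zero: "e_map Y 0 = 0"
  unfolding e_map_def by simp

locale thm_setting = strat_setting br V m
  for br :: "'v::euclidean_space \<Rightarrow> 'v \<Rightarrow> 'v" and V :: "nat \<Rightarrow> 'v set" and m :: nat +
  fixes s p d1 d2 \<alpha> \<beta> :: nat
    and X Z1 Z2 :: "nat \<Rightarrow> 'v" and l1 l2 :: "'v \<Rightarrow> real"
    and S :: "'v set" and Y :: "'n::finite \<Rightarrow> 'v"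
    and la lb :: real
  assumes s_lt: "s < m"
    and basisX: "basis_enum X p (V 1)"
    and l1_lin: "linear l1"
    and l1_vanish: "\<forall>i\<in>{1..m+1}. i \<noteq> s + 1 \<longrightarrow> (\<forall>x\<in>V i. l1 x = 0)"
    and l2_lin: "linear l2"
    and l2_vanish: "\<forall>i\<in>{1..m}. \<forall>x\<in>V i. l2 x = 0"
    and S_def: "S_choice br m s (X ` {..<p}) l1 l2 S"
    and Y_enum: "bij_betw Y UNIV S"
begin

abbreviation "BB \<equiv> X ` {..<p}"
definition "hh = span ((BB - S) \<union> (\<Union>j\<in>{2..m+1}. V j))"

lemma greedy_sub: "greedy P Out R \<Longrightarrow> (\<forall>q\<in>P. q \<subseteq> A) \<Longrightarrow> Out \<subseteq> A \<Longrightarrow> R \<subseteq> A"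
proof (induction rule: greedy.induct)
  case (step P x Out R)
  have "x \<in> A"
  proof -
    have "pair_count P x \<noteq> 0" using step(1) by simp
    then have "{q\<in>P. x \<in> q} \<noteq> {}" unfolding pair_count_def by (metis card.empty)
    then show ?thesis using step(5) by auto
  qed
  then show ?case using step.IH step.prems by blast
next
  case (stop P c Out)
  then show ?case by blast
qed

lemma S_sub: "S \<subseteq> BB"
proof -
  have g: "R \<subseteq> BB" if "greedy_output br l BB R" for l R
    using greedy_sub[of "init_pairs br l BB" "{}" R BB] that
    unfolding greedy_output_def init_pairs_def by auto
  have sp: "supp_set br l BB \<subseteq> BB" for l unfolding supp_set_def by auto
  have sc: "(m = 1 \<longrightarrow> greedy_output br l2 BB S) \<and>
     (s = 1 \<longrightarrow> (\<exists>S1. greedy_output br l1 BB S1 \<and> S = S1 \<union> supp_set br l2 BB)) \<and>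
     (s \<noteq> 1 \<and> m \<noteq> 1 \<longrightarrow> S = supp_set br l1 BB \<union> supp_set br l2 BB)"
    using S_def unfolding S_choice_def .
  show ?thesis
  proof (cases "m = 1")
    case True then show ?thesis using sc g by blast
  next
    case F: False
    show ?thesis
    proof (cases "s = 1")
      case True
      then obtain S1 where "greedy_output br l1 BB S1" "S = S1 \<union> supp_set br l2 BB" using sc by blast
      then show ?thesis using g sp by blast
    next
      case False
      then have "S = supp_set br l1 BB \<union> supp_set br l2 BB" using sc F by blast
      then show ?thesis using sp by blast
    qed
  qed
qed

lemma basis_all: "inj_on X {..<p} \<and> independent BB \<and> span BB = V 1"
  using basisX unfolding basis_enum_def .
lemmas basis_parts = basis_all[THEN conjunct1] basis_all[THEN conjunct2, THEN conjunct1] basis_all[THEN conjunct2, THEN conjunct2]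
lemma indepB: "independent BB" by (rule basis_parts(2))
lemma spanB: "span BB = V 1" by (rule basis_parts(3))
lemma injX: "inj_on X {..<p}" by (rule basis_parts(1))
lemma finB: "finite BB" by simp
lemma B_V1: "BB \<subseteq> V 1" using span_superset[of BB] unfolding spanB .
lemma subspace_V1: "subspace (V 1)" by (rule subspace_V) simp
lemma S_V1: "S \<subseteq> V 1" using S_sub B_V1 by (rule subset_trans)
lemma injY: "inj Y" using Y_enum unfolding bij_betw_def by (rule conjunct1)
lemma imY: "Y ` UNIV = S" using Y_enum unfolding bij_betw_def by (rule conjunct2)
lemma Y_V1: "Y j \<in> V 1" using S_V1 imY by blast

lemma zero_V: "j \<in> {1..m+1} \<Longrightarrow> 0 \<in> V j" using subspace_0[OF subspace_V] by blast

lemma add_V: "j \<in> {1..m+1} \<Longrightarrow> x \<in> V j \<Longrightarrow> y \<in> V j \<Longrightarrow> x + y \<in> V j"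
  using subspace_add[OF subspace_V] by blast
lemma scale_V: "j \<in> {1..m+1} \<Longrightarrow> x \<in> V j \<Longrightarrow> c *\<^sub>R x \<in> V j"
  using subspace_scale[OF subspace_V] by blast

lemma H2_hh: "H2 \<subseteq> hh" unfolding H2_def hh_def by (rule span_mono) auto
lemma W_hh: "BB - S \<subseteq> hh" unfolding hh_def by (rule subset_trans[OF Un_upper1 span_superset])
lemma subspace_hh: "subspace hh" unfolding hh_def by (rule subspace_span)

lemma H2_decomp: "z \<in> H2 \<Longrightarrow> \<exists>w. (\<forall>j\<in>{2..m+1}. w j \<in> V j) \<and> z = (\<Sum>j=2..m+1. w j)"
proof -
  let ?T = "{z. \<exists>w. (\<forall>j\<in>{2..m+1}. w j \<in> V j) \<and> z = (\<Sum>j=2..m+1. w j)}"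
  have "subspace ?T"
    unfolding subspace_def
  proof (intro conjI ballI allI)
    show "0 \<in> ?T" by (intro CollectI exI[of _ "\<lambda>_. 0"]) (auto intro: zero_V)
  next
    fix x y assume "x \<in> ?T" "y \<in> ?T"
    then obtain wx wy where "\<forall>j\<in>{2..m+1}. wx j \<in> V j" "x = (\<Sum>j=2..m+1. wx j)"
       "\<forall>j\<in>{2..m+1}. wy j \<in> V j" "y = (\<Sum>j=2..m+1. wy j)" by blast
    then show "x + y \<in> ?T"
      by (intro CollectI exI[of _ "\<lambda>j. wx j + wy j"]) (auto simp: sum.distrib intro: add_V)
  next
    fix c x assume "x \<in> ?T"
    then obtain wx where "\<forall>j\<in>{2..m+1}. wx j \<in> V j" "x = (\<Sum>j=2..m+1. wx j)" by blast
    then show "c *\<^sub>R x \<in> ?T"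
      by (intro CollectI exI[of _ "\<lambda>j. c *\<^sub>R wx j"]) (auto simp: scaleR_sum_right scaleR_add_right intro: scale_V)
  qed
  moreover have "(\<Union>j\<in>{2..m+1}. V j) \<subseteq> ?T"
  proof
    fix x assume "x \<in> (\<Union>j\<in>{2..m+1}. V j)"
    then obtain k where k: "k \<in> {2..m+1}" "x \<in> V k" by blast
    show "x \<in> ?T"
    proof (intro CollectI exI[of _ "\<lambda>j. if j = k then x else 0"] conjI ballI)
      fix j assume "j \<in> {2..m+1}"
      then show "(if j = k then x else 0) \<in> V j" using k by (auto intro: zero_V)
    next
      show "x = (\<Sum>j=2..m+1. if j = k then x else 0)" using k by simp
    qed
  qed
  ultimately have "H2 \<subseteq> ?T" unfolding H2_def by (rule span_minimal[rotated])
  then show "z \<in> H2 \<Longrightarrow> ?thesis" by blast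
qed

lemma V1_H2: "z \<in> V 1 \<Longrightarrow> z \<in> H2 \<Longrightarrow> z = 0"
proof -
  assume z1: "z \<in> V 1" and z2: "z \<in> H2"
  obtain w where w: "\<forall>j\<in>{2..m+1}. w j \<in> V j" "z = (\<Sum>j=2..m+1. w j)" using H2_decomp[OF z2] by blast
  define w1 where "w1 j = (if j = 1 then z else 0)" for j :: nat
  define w2 where "w2 j = (if j \<in> {2..m+1} then w j else 0)" for j
  have c1: "(\<forall>j\<in>{1..m+1}. w1 j \<in> V j) \<and> (\<forall>j. j \<notin> {1..m+1} \<longrightarrow> w1 j = 0) \<and> z = (\<Sum>j=1..m+1. w1 j)"
    unfolding w1_def using z1 by (auto intro: zero_V)
  have "(\<Sum>j=1..m+1. w2 j) = (\<Sum>j=2..m+1. w2 j)"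
    by (rule sum.mono_neutral_right) (auto simp: w2_def)
  also have "\<dots> = z" unfolding w(2) w2_def by simp
  finally have c2: "(\<forall>j\<in>{1..m+1}. w2 j \<in> V j) \<and> (\<forall>j. j \<notin> {1..m+1} \<longrightarrow> w2 j = 0) \<and> z = (\<Sum>j=1..m+1. w2 j)"
    unfolding w2_def using w(1) by (auto intro: zero_V)
  have "\<exists>!w. (\<forall>j\<in>{1..m+1}. w j \<in> V j) \<and> (\<forall>j. j \<notin> {1..m+1} \<longrightarrow> w j = 0) \<and> z = (\<Sum>j=1..m+1. w j)"
    using strat_parts(4) by (rule spec)
  then have "w1 = w2" using c1 c2 by (elim ex1E) blast
  then have "w1 1 = w2 1" by simp
  then show "z = 0" unfolding w1_def w2_def by simp
qed

lemma span_S_hh: "v \<in> span S \<Longrightarrow> v \<in> hh \<Longrightarrow> v = 0"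
proof -
  assume vS: "v \<in> span S" and vh: "v \<in> hh"
  obtain w z where wz: "v = w + z" "w \<in> span (BB - S)" "z \<in> H2"
    using vh unfolding hh_def span_Un H2_def by blast
  have spS: "span S \<subseteq> V 1" using S_V1 subspace_V1 span_minimal by blast
  have "BB - S \<subseteq> V 1" using B_V1 by blast
  then have spW: "span (BB - S) \<subseteq> V 1" using subspace_V1 span_minimal by blast
  have "z = v - w" using wz by simp
  moreover have "v - w \<in> V 1"
  proof -
    have "v \<in> V 1" "w \<in> V 1" using vS wz(2) spS spW by blast+
    then show ?thesis using subspace_diff[OF subspace_V1] by blast
  qed
  ultimately have "z \<in> V 1" by simp
  then have "z = 0" using V1_H2 wz(3) by blast
  then have "v \<in> span (BB - S)" using wz by simp
  then show "v = 0" using span_disjoint_indep[OF indepB S_sub vS] by simp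
qed

lemma e_map_span: "e_map Y u \<in> span S"
  unfolding e_map_def by (rule span_sum, rule span_scale, rule span_base) (use imY in auto)

lemma e_map_inj0: "e_map Y u = 0 \<Longrightarrow> u = 0"
proof -
  assume e0: "e_map Y u = 0"
  have finS: "finite S" using S_sub finite_subset finB by blast
  have indS: "independent S" using indepB S_sub independent_mono by blast
  define c where "c x = u $ (inv Y x)" for x
  have "(\<Sum>x\<in>S. c x *\<^sub>R x) = (\<Sum>i\<in>UNIV. c (Y i) *\<^sub>R Y i)"
    unfolding imY[symmetric] using sum.reindex[OF injY, of "\<lambda>x. c x *\<^sub>R x"] by simp
  also have "\<dots> = e_map Y u" unfolding e_map_def c_def using injY by simp
  finally have "(\<Sum>x\<in>S. c x *\<^sub>R x) = 0" using e0 by simp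
  then have "\<forall>x\<in>S. c x = 0" using indS independent_explicit by blast
  then have "u $ i = 0" for i
  proof -
    have "Y i \<in> S" using imY by blast
    then have "c (Y i) = 0" using \<open>\<forall>x\<in>S. c x = 0\<close> by blast
    then show ?thesis unfolding c_def using inv_f_f[OF injY] by simp
  qed
  then show "u = 0" by (simp add: vec_eq_iff)
qed

end


lemma differentiable_prod_real:
  fixes f :: "'i \<Rightarrow> real \<Rightarrow> real"
  shows "finite I \<Longrightarrow> (\<And>i. i \<in> I \<Longrightarrow> f i differentiable (at x)) \<Longrightarrow> (\<lambda>x. \<Prod>i\<in>I. f i x) differentiable (at x)"
proof (induction I rule: finite_induct)
  case empty then show ?case by simp
next
  case (insert a I)
  then show ?case by (simp add: differentiable_mult)
qed

lemma homog_poly_line_diff: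
  fixes t :: "real^'n::finite"
  assumes "homog_poly d P"
  shows "(\<lambda>u. P (t + u *\<^sub>R v)) differentiable (at x)"
proof -
  obtain c where c: "\<And>t. P t = (\<Sum>\<alpha>\<in>{\<alpha>. sum \<alpha> UNIV = d}. c \<alpha> * (\<Prod>i\<in>UNIV. (t $ i) ^ \<alpha> i))"
    using assms unfolding homog_poly_def by blast
  have "(\<lambda>u. \<Sum>\<alpha>\<in>{\<alpha>. sum \<alpha> UNIV = d}. c \<alpha> * (\<Prod>i\<in>UNIV. ((t + u *\<^sub>R v) $ i) ^ \<alpha> i)) differentiable (at x)"
  proof (intro differentiable_sum ballI differentiable_mult differentiable_const differentiable_prod_real)
    show "finite {\<alpha>::'n \<Rightarrow> nat. sum \<alpha> UNIV = d}" by (rule finite_deg_set)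
    fix \<alpha> i
    show "(\<lambda>u. ((t + u *\<^sub>R v) $ i) ^ \<alpha> i) differentiable (at x)"
      by (intro differentiable_power) (simp add: differentiable_add differentiable_mult)
  qed simp
  then show ?thesis unfolding c .
qed

context thm_setting
begin

definition cvec :: "nat \<Rightarrow> real^'n" where
  "cvec i = (if X i \<in> S then axis (inv Y (X i)) 1 else 0)"

lemma in_hh_shift: "a - b \<in> hh \<Longrightarrow> (a \<in> hh \<longleftrightarrow> b \<in> hh)"
  using subspace_hh by (metis add_diff_cancel_left' diff_add_cancel subspace_add subspace_diff)

lemma e_in_hh: "e_map Y u \<in> hh \<longleftrightarrow> u = 0"
  using span_S_hh[OF e_map_span] e_map_inj0 e_map_zero subspace_hh subspace_0 by metis

lemma coordS_eq:
  assumes i: "i < p"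
  shows "coordS br m hh Y (\<tau> *\<^sub>R X i) = \<tau> *\<^sub>R cvec i"
proof -
  have key: "gmult br m (- e_map Y u) (\<tau> *\<^sub>R X i) \<in> hh \<longleftrightarrow> u = \<tau> *\<^sub>R cvec i" for u
  proof -
    have "gmult br m (- e_map Y u) (\<tau> *\<^sub>R X i) - (- e_map Y u + \<tau> *\<^sub>R X i) \<in> hh"
      unfolding gmult_def using bch_H2[of "m+1" "- e_map Y u" "\<tau> *\<^sub>R X i"] H2_hh by auto
    then have 1: "gmult br m (- e_map Y u) (\<tau> *\<^sub>R X i) \<in> hh \<longleftrightarrow> - e_map Y u + \<tau> *\<^sub>R X i \<in> hh"
      by (rule in_hh_shift)
    show ?thesis
    proof (cases "X i \<in> S")
      case True
      define j where "j = inv Y (X i)"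
      have Yj: "Y j = X i" unfolding j_def using True imY by (simp add: f_inv_into_f)
      have cv: "cvec i = axis j 1" unfolding cvec_def j_def using True by simp
      have "- e_map Y u + \<tau> *\<^sub>R X i = - e_map Y (u - \<tau> *\<^sub>R axis j 1)"
        by (simp add: e_map_diff e_map_scale e_map_axis Yj)
      moreover have "- w \<in> hh \<longleftrightarrow> w \<in> hh" for w
        using subspace_hh by (metis subspace_neg verit_minus_simplify(4))
      ultimately have "- e_map Y u + \<tau> *\<^sub>R X i \<in> hh \<longleftrightarrow> u - \<tau> *\<^sub>R axis j 1 = 0"
        using e_in_hh by simp
      then show ?thesis using 1 cv by simp
    next
      case False
      then have "X i \<in> hh" using W_hh i by blast
      then have "\<tau> *\<^sub>R X i \<in> hh" using subspace_hh subspace_scale by blast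
      then have "- e_map Y u + \<tau> *\<^sub>R X i \<in> hh \<longleftrightarrow> e_map Y u \<in> hh"
        using subspace_hh by (metis add.commute diff_add_cancel diff_minus_eq_add minus_diff_eq subspace_diff subspace_neg uminus_add_conv_diff)
      then show ?thesis using 1 e_in_hh False unfolding cvec_def by simp
    qed
  qed
  show ?thesis unfolding coordS_def
    by (rule the_equality) (use key in blast)+
qed

end


context thm_setting
begin

definition PhiF :: "nat \<Rightarrow> real \<Rightarrow> real^'n \<Rightarrow> 'v" where
  "PhiF i \<tau> t = gmult br m (gmult br m (e_map Y t) (\<tau> *\<^sub>R X i)) (- e_map Y (t + \<tau> *\<^sub>R cvec i))"

lemma V1_Vx: "w \<in> V 1 \<Longrightarrow> w \<in> Vx (1 + 0) \<and> w \<in> Vx (0 + 1)" unfolding Vx_def by simp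

lemma e_Gc0: "(\<lambda>t. e_map Y t) \<in> Gc 0"
proof -
  have "(\<lambda>t. \<Sum>j\<in>UNIV. (t $ j) *\<^sub>R Y j) \<in> Gc 0"
  proof (rule Gc_sum)
    fix j
    show "(\<lambda>t. (t $ j) *\<^sub>R Y j) \<in> Gc 0"
      by (rule Gc.Gatom[OF homog_poly_coord]) (use V1_Vx[OF Y_V1] in blast)
  qed
  then show ?thesis unfolding e_map_def .
qed

lemma const_Gc1: "w \<in> V 1 \<Longrightarrow> (\<lambda>t::real^'n. w) \<in> Gc 1"
proof -
  assume "w \<in> V 1"
  then have "(\<lambda>t::real^'n. 1 *\<^sub>R w) \<in> Gc 1" using Gc.Gatom[OF homog_poly_const[of 1], of w 1] V1_Vx by blast
  then show ?thesis by simp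
qed

lemma e_V1: "e_map Y u \<in> V 1"
  using e_map_span S_V1 subspace_V1 span_minimal by blast

lemma X_V1: "i < p \<Longrightarrow> X i \<in> V 1" using B_V1 by blast

lemma okd_PhiF: "i < p \<Longrightarrow> okd (PhiF i)"
proof -
  assume i: "i < p"
  have A: "okd (\<lambda>\<tau> t. e_map Y t)" by (rule okd_const[OF e_Gc0])
  have B: "okd (\<lambda>\<tau> (t::real^'n). 0 + \<tau> *\<^sub>R X i)"
    by (rule okd_affine[OF Gc.Gzero const_Gc1[OF X_V1[OF i]]])
  have C: "okd (\<lambda>\<tau> t. (-1) *\<^sub>R e_map Y t + \<tau> *\<^sub>R ((-1) *\<^sub>R e_map Y (cvec i)))"
    by (rule okd_affine[OF Gc_scale[OF e_Gc0] Gc_scale[OF const_Gc1[OF e_V1]]])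
  have "okd (\<lambda>\<tau> t. bch br (m+1) (bch br (m+1) (e_map Y t) (0 + \<tau> *\<^sub>R X i))
           ((-1) *\<^sub>R e_map Y t + \<tau> *\<^sub>R ((-1) *\<^sub>R e_map Y (cvec i))))"
    by (rule okd_bch[OF okd_bch[OF A B] C])
  moreover have "PhiF i = (\<lambda>\<tau> t. bch br (m+1) (bch br (m+1) (e_map Y t) (0 + \<tau> *\<^sub>R X i))
           ((-1) *\<^sub>R e_map Y t + \<tau> *\<^sub>R ((-1) *\<^sub>R e_map Y (cvec i))))"
    unfolding PhiF_def gmult_def by (simp add: fun_eq_iff e_map_add e_map_scale)
  ultimately show ?thesis by simp
qed

lemma PhiF0: "PhiF i 0 t = 0"
proof -
  have "PhiF i 0 t = bch br (m+1) (bch br (m+1) (1 *\<^sub>R e_map Y t) (0 *\<^sub>R e_map Y t)) ((-1) *\<^sub>R e_map Y t)"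
    unfolding PhiF_def gmult_def by simp
  also have "\<dots> = 0" by (simp only: bch_same) simp
  finally show ?thesis .
qed

definition Dphi :: "nat \<Rightarrow> real^'n \<Rightarrow> 'v" where
  "Dphi i = (SOME F. F \<in> Gc 1 \<and> (\<forall>t. ((\<lambda>\<tau>. PhiF i \<tau> t) has_vector_derivative F t) (at 0)))"

lemma Dphi: "i < p \<Longrightarrow> Dphi i \<in> Gc 1 \<and> (\<forall>t. ((\<lambda>\<tau>. PhiF i \<tau> t) has_vector_derivative Dphi i t) (at 0))"
proof -
  assume i: "i < p"
  have "\<exists>F. F \<in> Gc 1 \<and> (\<forall>t. ((\<lambda>\<tau>. PhiF i \<tau> t) has_vector_derivative F t) (at 0))"
    using okd_PhiF[OF i] unfolding okd_def by blast
  then show ?thesis unfolding Dphi_def by (rule someI_ex)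
qed

definition lam :: "'v \<Rightarrow> real" where "lam v = la * l1 v + lb * l2 v"

definition phi :: "nat \<Rightarrow> real^'n \<Rightarrow> real" where "phi i t = lam (Dphi i t)"

lemma lam_lin: "linear lam"
  unfolding linear_iff lam_def
  by (simp add: linear_add[OF l1_lin] linear_add[OF l2_lin] linear_scale[OF l1_lin] linear_scale[OF l2_lin] algebra_simps)

lemma rep_pi_eq: "i < p \<Longrightarrow> rep_pi br m hh Y lam (\<tau> *\<^sub>R X i) g t =
   exp (\<i> * complex_of_real (lam (PhiF i \<tau> t))) * g (t + \<tau> *\<^sub>R cvec i)"
  unfolding rep_pi_def Let_def coordS_eq PhiF_def by simp

lemma exp_part_deriv:
  assumes i: "i < p"
  shows "((\<lambda>\<tau>. exp (\<i> * complex_of_real (lam (PhiF i \<tau> t)))) has_vector_derivative (\<i> * complex_of_real (phi i t))) (at 0)"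
proof -
  have bl: "bounded_linear lam" using lam_lin linear_conv_bounded_linear by blast
  have d1: "((\<lambda>\<tau>. lam (PhiF i \<tau> t)) has_vector_derivative lam (Dphi i t)) (at 0)"
    using bounded_linear.has_vector_derivative[OF bl] Dphi[OF i] by blast
  then have d1': "((\<lambda>\<tau>. lam (PhiF i \<tau> t)) has_field_derivative lam (Dphi i t)) (at 0)"
    by (simp add: has_real_derivative_iff_has_vector_derivative)
  have d2: "((\<lambda>\<tau>. \<i> * complex_of_real (lam (PhiF i \<tau> t))) has_vector_derivative \<i> * complex_of_real (lam (Dphi i t))) (at 0)"
    using has_vector_derivative_mult[OF has_vector_derivative_const[of "\<i>"] has_vector_derivative_of_real[OF d1']]
    by simp
  have "((exp \<circ> (\<lambda>\<tau>. \<i> * complex_of_real (lam (PhiF i \<tau> t)))) has_vector_derivative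
        (\<i> * complex_of_real (lam (Dphi i t))) * exp (\<i> * complex_of_real (lam (PhiF i 0 t)))) (at 0)"
    by (rule field_vector_diff_chain_at[OF d2 DERIV_exp])
  moreover have "lam (PhiF i 0 t) = 0" unfolding PhiF0 using linear_0[OF lam_lin] .
  ultimately show ?thesis unfolding phi_def o_def by simp
qed

lemma dpi_S:
  assumes i: "i < p" and XY: "X i = Y j"
    and dg: "(\<lambda>u. g (t + u *\<^sub>R axis j 1)) differentiable (at 0)"
  shows "d_rep_pi br m hh Y lam (X i) g t = partial j g t + \<i> * complex_of_real (phi i t) * g t"
proof -
  have XS: "X i \<in> S" using XY imY by blast
  have "inv Y (X i) = j" using XY injY by (simp add: inv_f_f)
  then have cv: "cvec i = axis j 1" unfolding cvec_def using XS by simp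
  have dG: "((\<lambda>u. g (t + u *\<^sub>R axis j 1)) has_vector_derivative partial j g t) (at 0)"
    unfolding partial_def using dg vector_derivative_works by blast
  have "((\<lambda>\<tau>. exp (\<i> * complex_of_real (lam (PhiF i \<tau> t))) * g (t + \<tau> *\<^sub>R axis j 1)) has_vector_derivative
     exp (\<i> * complex_of_real (lam (PhiF i 0 t))) * partial j g t + (\<i> * complex_of_real (phi i t)) * g (t + 0 *\<^sub>R axis j 1)) (at 0)"
    by (rule has_vector_derivative_mult[OF exp_part_deriv[OF i] dG])
  moreover have "lam (PhiF i 0 t) = 0" unfolding PhiF0 using linear_0[OF lam_lin] .
  ultimately have "((\<lambda>\<tau>. rep_pi br m hh Y lam (\<tau> *\<^sub>R X i) g t) has_vector_derivative
     partial j g t + \<i> * complex_of_real (phi i t) * g t) (at 0)"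
    unfolding rep_pi_eq[OF i] cv by simp
  then show ?thesis unfolding d_rep_pi_def by (rule vector_derivative_at)
qed

lemma dpi_W:
  assumes i: "i < p" and XS: "X i \<notin> S"
  shows "d_rep_pi br m hh Y lam (X i) g t = \<i> * complex_of_real (phi i t) * g t"
proof -
  have cv: "cvec i = 0" unfolding cvec_def using XS by simp
  have "((\<lambda>\<tau>. exp (\<i> * complex_of_real (lam (PhiF i \<tau> t))) * g t) has_vector_derivative
     (\<i> * complex_of_real (phi i t)) * g t) (at 0)"
    using has_vector_derivative_mult[OF exp_part_deriv[OF i] has_vector_derivative_const[of "g t"]] by simp
  then have "((\<lambda>\<tau>. rep_pi br m hh Y lam (\<tau> *\<^sub>R X i) g t) has_vector_derivative
     \<i> * complex_of_real (phi i t) * g t) (at 0)"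
    unfolding rep_pi_eq[OF i] cv by simp
  then show ?thesis unfolding d_rep_pi_def by (rule vector_derivative_at)
qed

end


lemma of_real_line_diff:
  fixes r :: "real \<Rightarrow> real"
  assumes "r differentiable (at x)"
  shows "(\<lambda>u. complex_of_real (r u)) differentiable (at x)"
proof -
  have "(of_real \<circ> r) differentiable (at x)"
    by (rule differentiable_chain_at[OF assms bounded_linear_imp_differentiable[OF bounded_linear_of_real]])
  then show ?thesis by (simp add: o_def)
qed

context thm_setting
begin

lemma l1_0: "l1 0 = 0" using linear_0[OF l1_lin] .
lemma l2_0: "l2 0 = 0" using linear_0[OF l2_lin] .

lemma Gc1_l1: "F \<in> Gc 1 \<Longrightarrow> homog_poly s (\<lambda>t. l1 (F t))"
proof (induction rule: Gc.induct)
  case Gzero then show ?case using l1_0 homog_poly_zero by simp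
next
  case (Gatom k h w)
  have eq: "(\<lambda>t. l1 (h t *\<^sub>R w)) = (\<lambda>t. l1 w * h t)" using linear_scale[OF l1_lin] by (simp add: mult.commute)
  show ?case
  proof (cases "k = s")
    case True then show ?thesis unfolding eq using homog_poly_scale[OF Gatom(1)] by simp
  next
    case False
    have "l1 w = 0"
    proof (cases "k + 1 \<in> {1..m+1}")
      case True
      then have "w \<in> V (k + 1)" using Gatom(2) unfolding Vx_def by simp
      then show ?thesis using l1_vanish True False by auto
    next
      case False2: False
      then have "w = 0" using Gatom(2) unfolding Vx_def by simp
      then show ?thesis using l1_0 by simp
    qed
    then show ?thesis unfolding eq using homog_poly_zero by simp
  qed
next
  case (Gadd F H)
  then show ?case using homog_poly_add linear_add[OF l1_lin] by simp
qed

lemma Gc1_l2: "F \<in> Gc 1 \<Longrightarrow> homog_poly m (\<lambda>t. l2 (F t))"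
proof (induction rule: Gc.induct)
  case Gzero then show ?case using l2_0 homog_poly_zero by simp
next
  case (Gatom k h w)
  have eq: "(\<lambda>t. l2 (h t *\<^sub>R w)) = (\<lambda>t. l2 w * h t)" using linear_scale[OF l2_lin] by (simp add: mult.commute)
  show ?case
  proof (cases "k = m")
    case True then show ?thesis unfolding eq using homog_poly_scale[OF Gatom(1)] by simp
  next
    case False
    have "l2 w = 0"
    proof (cases "k + 1 \<in> {1..m+1}")
      case True
      then have "w \<in> V (k + 1)" using Gatom(2) unfolding Vx_def by simp
      moreover have "k + 1 \<in> {1..m}" using True False by auto
      ultimately show ?thesis using l2_vanish by blast
    next
      case False2: False
      then have "w = 0" using Gatom(2) unfolding Vx_def by simp
      then show ?thesis using l2_0 by simp
    qed
    then show ?thesis unfolding eq using homog_poly_zero by simp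
  qed
next
  case (Gadd F H)
  then show ?case using homog_poly_add linear_add[OF l2_lin] by simp
qed

lemma phi_eq: "phi i t = la * l1 (Dphi i t) + lb * l2 (Dphi i t)"
  unfolding phi_def lam_def ..

lemma phi_line_diff: "i < p \<Longrightarrow> (\<lambda>u. phi i (t + u *\<^sub>R v)) differentiable (at x)"
proof -
  assume i: "i < p"
  have "(\<lambda>u. l1 (Dphi i (t + u *\<^sub>R v))) differentiable (at x)"
    using homog_poly_line_diff[OF Gc1_l1[OF Dphi[OF i, THEN conjunct1]]] .
  moreover have "(\<lambda>u. l2 (Dphi i (t + u *\<^sub>R v))) differentiable (at x)"
    using homog_poly_line_diff[OF Gc1_l2[OF Dphi[OF i, THEN conjunct1]]] .
  ultimately show ?thesis unfolding phi_eq
    by (intro differentiable_add differentiable_mult differentiable_const)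
qed

definition ix :: "'n \<Rightarrow> nat" where "ix j = inv_into {..<p} X (Y j)"

lemma ix: "ix j < p" "X (ix j) = Y j"
proof -
  have mem: "Y j \<in> X ` {..<p}" using imY S_sub by blast
  show "ix j < p" using inv_into_into[OF mem] unfolding ix_def by simp
  show "X (ix j) = Y j" using f_inv_into_f[OF mem] unfolding ix_def .
qed

definition "Sidx = {i. i < p \<and> X i \<in> S}"
definition "Widx = {i. i < p \<and> X i \<notin> S}"

lemma bij_ix: "bij_betw ix UNIV Sidx"
proof (rule bij_betwI')
  fix j k
  show "ix j = ix k \<longleftrightarrow> j = k"
  proof
    assume "ix j = ix k"
    then have "Y j = Y k" using ix(2) by metis
    then show "j = k" using injY by (auto dest: injD)
  qed simp
next
  fix j show "ix j \<in> Sidx" unfolding Sidx_def using ix imY by auto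
next
  fix i assume "i \<in> Sidx"
  then have i: "i < p" "X i \<in> S" unfolding Sidx_def by auto
  then obtain j where j: "Y j = X i" using imY by (metis imageE)
  have "ix j = i" unfolding ix_def j using i injX by (simp add: inv_into_f_f)
  then show "\<exists>j\<in>UNIV. i = ix j" by auto
qed

lemma card_Widx: "card Widx = p - card S"
proof -
  have "card Sidx = card (UNIV :: 'n set)" using bij_betw_same_card[OF bij_ix] by simp
  also have "\<dots> = card S" using bij_betw_same_card[OF Y_enum] .
  finally have cS: "card Sidx = card S" .
  have "{..<p} = Sidx \<union> Widx" "Sidx \<inter> Widx = {}" unfolding Sidx_def Widx_def by auto
  then have "p = card Sidx + card Widx"
    by (metis card_Un_disjoint card_lessThan finite_Un finite_lessThan)
  then show ?thesis using cS by simp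
qed

end


context thm_setting
begin

lemma lam_abs: "lam = (\<lambda>v. la * l1 v + lb * l2 v)" by (rule ext) (simp add: lam_def)

lemma main_result:
  "\<exists>pt qt :: 'n \<Rightarrow> real^'n \<Rightarrow> real. \<exists>pp qq :: nat \<Rightarrow> real^'n \<Rightarrow> real.
     (\<forall>j. homog_poly s (pt j) \<and> homog_poly m (qt j)) \<and>
     (\<forall>k < p - card S. homog_poly s (pp k) \<and> homog_poly m (qq k)) \<and>
     (\<forall>f. smooth_fun f \<longrightarrow>
        (let h = span ((X ` {..<p} - S) \<union> (\<Union>j\<in>{2..m+1}. V j));
             lam = (\<lambda>v. la * l1 v + lb * l2 v);
             dpi = d_rep_pi br m h Y lam;
             D = (\<lambda>j g t. partial j g t + \<i> * complex_of_real (la * pt j t + lb * qt j t) * g t)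
         in (\<forall>t. (\<Sum>i<p. dpi (X i) (dpi (X i) f) t) =
               (\<Sum>j\<in>UNIV. D j (D j f) t)
               - (\<Sum>k < p - card S. complex_of_real ((lb * qq k t + la * pp k t)\<^sup>2) * f t))))"
proof -
  have finW: "finite Widx" unfolding Widx_def by simp
  obtain en where en: "bij_betw en {0..<card Widx} Widx" using ex_bij_betw_nat_finite[OF finW] by blast
  have enW: "k < p - card S \<Longrightarrow> en k \<in> Widx" for k
    using en card_Widx unfolding bij_betw_def by auto
  have enp: "k < p - card S \<Longrightarrow> en k < p" for k using enW unfolding Widx_def by blast
  define pt where "pt j = (\<lambda>t. l1 (Dphi (ix j) t))" for j
  define qt where "qt j = (\<lambda>t. l2 (Dphi (ix j) t))" for j
  define pp where "pp k = (\<lambda>t. l1 (Dphi (en k) t))" for k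
  define qq where "qq k = (\<lambda>t. l2 (Dphi (en k) t))" for k
  define Dop where "Dop = (\<lambda>j g t. partial j g t + \<i> * complex_of_real (la * pt j t + lb * qt j t) * g t)"
  have H1: "\<forall>j. homog_poly s (pt j) \<and> homog_poly m (qt j)"
    unfolding pt_def qt_def using Gc1_l1 Gc1_l2 Dphi[OF ix(1)] by blast
  have H2': "\<forall>k < p - card S. homog_poly s (pp k) \<and> homog_poly m (qq k)"
    unfolding pp_def qq_def using Gc1_l1 Gc1_l2 Dphi[OF enp] by blast
  have MAIN: "(\<Sum>i<p. d_rep_pi br m hh Y lam (X i) (d_rep_pi br m hh Y lam (X i) f) t) =
               (\<Sum>j\<in>UNIV. Dop j (Dop j f) t)
               - (\<Sum>k < p - card S. complex_of_real ((lb * qq k t + la * pp k t)\<^sup>2) * f t)"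
    if sm: "smooth_fun f" for f t
  proof -
    let ?F = "\<lambda>i. d_rep_pi br m hh Y lam (X i) (d_rep_pi br m hh Y lam (X i) f) t"
    have fdiff: "(\<lambda>u. f (t' + u *\<^sub>R axis j 1)) differentiable (at 0)" for j t'
      using sm unfolding smooth_fun_def by (metis iter_partial.simps(1))
    have pdiff: "(\<lambda>u. partial j f (t' + u *\<^sub>R axis j 1)) differentiable (at 0)" for j t'
      using sm unfolding smooth_fun_def by (metis iter_partial.simps)
    have phix: "la * pt j t' + lb * qt j t' = phi (ix j) t'" for j t'
      unfolding pt_def qt_def phi_eq ..
    have Dop_eq: "Dop j g t' = partial j g t' + \<i> * complex_of_real (phi (ix j) t') * g t'" for j g t'
      unfolding Dop_def phix ..
    have eq1: "d_rep_pi br m hh Y lam (X (ix j)) f = Dop j f" for j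
    proof (rule ext)
      fix t' show "d_rep_pi br m hh Y lam (X (ix j)) f t' = Dop j f t'"
        unfolding Dop_eq by (rule dpi_S[OF ix(1) ix(2) fdiff])
    qed
    have diff2: "(\<lambda>u. Dop j f (t + u *\<^sub>R axis j 1)) differentiable (at 0)" for j
      unfolding Dop_eq
      by (intro differentiable_add differentiable_mult differentiable_const pdiff fdiff
          of_real_line_diff phi_line_diff ix(1))
    have FS: "?F (ix j) = Dop j (Dop j f) t" for j
      unfolding eq1 Dop_eq[of j "Dop j f" t] by (rule dpi_S[OF ix(1) ix(2) diff2])
    have FW: "?F i = - (complex_of_real ((phi i t)\<^sup>2) * f t)" if "i \<in> Widx" for i
    proof -
      have i: "i < p" "X i \<notin> S" using that unfolding Widx_def by auto
      have "?F i = \<i> * complex_of_real (phi i t) * (\<i> * complex_of_real (phi i t) * f t)"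
        using dpi_W[OF i] by simp
      also have "\<dots> = - (complex_of_real ((phi i t)\<^sup>2) * f t)"
        by (simp add: power2_eq_square algebra_simps)
      finally show ?thesis .
    qed
    have split: "{..<p} = Sidx \<union> Widx" "Sidx \<inter> Widx = {}" unfolding Sidx_def Widx_def by auto
    have "(\<Sum>i<p. ?F i) = (\<Sum>i\<in>Sidx. ?F i) + (\<Sum>i\<in>Widx. ?F i)"
      unfolding split(1) by (rule sum.union_disjoint) (auto simp: Sidx_def Widx_def)
    also have "(\<Sum>i\<in>Sidx. ?F i) = (\<Sum>j\<in>UNIV. ?F (ix j))"
      by (rule sum.reindex_bij_betw[OF bij_ix, symmetric])
    also have "\<dots> = (\<Sum>j\<in>UNIV. Dop j (Dop j f) t)" using FS by simp
    also have "(\<Sum>i\<in>Widx. ?F i) = (\<Sum>k\<in>{0..<card Widx}. ?F (en k))"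
      by (rule sum.reindex_bij_betw[OF en, symmetric])
    also have "\<dots> = (\<Sum>k<p - card S. - (complex_of_real ((lb * qq k t + la * pp k t)\<^sup>2) * f t))"
    proof (rule sum.cong)
      show "{0..<card Widx} = {..<p - card S}" using card_Widx by auto
    next
      fix k assume "k \<in> {..<p - card S}"
      then have k: "k < p - card S" by simp
      have "phi (en k) t = lb * qq k t + la * pp k t" unfolding phi_eq pp_def qq_def by simp
      then show "?F (en k) = - (complex_of_real ((lb * qq k t + la * pp k t)\<^sup>2) * f t)"
        using FW[OF enW[OF k]] by simp
    qed
    finally show ?thesis by (simp add: sum_negf)
  qed
  show ?thesis
    apply (rule exI[of _ pt], rule exI[of _ qt], rule exI[of _ pp], rule exI[of _ qq])
    using H1 H2' MAIN unfolding Let_def hh_def[symmetric] lam_abs[symmetric] Dop_def by simp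
qed

end

theorem theorem2p1:
  fixes br :: "'v::euclidean_space \<Rightarrow> 'v \<Rightarrow> 'v"
    and V :: "nat \<Rightarrow> 'v set" and m s p d1 d2 \<alpha> \<beta> :: nat
    and X Z1 Z2 :: "nat \<Rightarrow> 'v" and l1 l2 :: "'v \<Rightarrow> real"
    and S :: "'v set" and Y :: "'n::finite \<Rightarrow> 'v"
    and la lb :: real
  assumes strat: "stratified br V m"
    and s_lt: "s < m"
    and basisX: "basis_enum X p (V 1)"
    and basisZ1: "basis_enum Z1 d1 (V (s + 1))" and alpha: "\<alpha> < d1"
    and l1_lin: "linear l1"
    and l1_vanish: "\<forall>i\<in>{1..m+1}. i \<noteq> s + 1 \<longrightarrow> (\<forall>x\<in>V i. l1 x = 0)"
    and l1_dual: "\<forall>j<d1. l1 (Z1 j) = (if j = \<alpha> then 1 else 0)"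
    and basisZ2: "basis_enum Z2 d2 (V (m + 1))" and beta: "\<beta> < d2"
    and l2_lin: "linear l2"
    and l2_vanish: "\<forall>i\<in>{1..m}. \<forall>x\<in>V i. l2 x = 0"
    and l2_dual: "\<forall>j<d2. l2 (Z2 j) = (if j = \<beta> then 1 else 0)"
    and l1_br: "\<forall>k\<in>{2..m+1}. \<forall>j\<in>{2..m+1}. \<forall>x\<in>V k. \<forall>y\<in>V j. l1 (br x y) = 0"
    and l2_br: "\<forall>k\<in>{2..m+1}. \<forall>j\<in>{2..m+1}. \<forall>x\<in>V k. \<forall>y\<in>V j. l2 (br x y) = 0"
    and S_def: "S_choice br m s (X ` {..<p}) l1 l2 S"
    and Y_enum: "bij_betw Y UNIV S"
    and la: "la \<noteq> 0" and lb: "lb \<noteq> 0"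
  shows "\<exists>pt qt :: 'n \<Rightarrow> real^'n \<Rightarrow> real. \<exists>pp qq :: nat \<Rightarrow> real^'n \<Rightarrow> real.
     (\<forall>j. homog_poly s (pt j) \<and> homog_poly m (qt j)) \<and>
     (\<forall>k < p - card S. homog_poly s (pp k) \<and> homog_poly m (qq k)) \<and>
     (\<forall>f. smooth_fun f \<longrightarrow>
        (let h = span ((X ` {..<p} - S) \<union> (\<Union>j\<in>{2..m+1}. V j));
             lam = (\<lambda>v. la * l1 v + lb * l2 v);
             dpi = d_rep_pi br m h Y lam;
             D = (\<lambda>j g t. partial j g t + \<i> * complex_of_real (la * pt j t + lb * qt j t) * g t)
         in (\<forall>t. (\<Sum>i<p. dpi (X i) (dpi (X i) f) t) =
               (\<Sum>j\<in>UNIV. D j (D j f) t)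
               - (\<Sum>k < p - card S. complex_of_real ((lb * qq k t + la * pp k t)\<^sup>2) * f t))))"
proof -
  interpret thm_setting br V m s p d1 d2 \<alpha> \<beta> X Z1 Z2 l1 l2 S Y la lb
    by (rule thm_setting.intro[OF strat_setting.intro[OF strat]
      thm_setting_axioms.intro[OF s_lt basisX l1_lin l1_vanish l2_lin l2_vanish S_def Y_enum]])
  show ?thesis by (rule main_result)
qed

end
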